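(* Assume $f(\cdot,u_t)$ is a diffeomorphism of $\mathbb{R}^{\dim(s)}$ for every $t$. The online natural gradient in charts for the models $\mathfrak p_t$ on $\mathcal S$ in the charts $\Phi_t$, written on $s_t:=\Phi_t(\mathbf s^t)$ and the matrix $J_t$ of $\mathcal J_t$ in chart $\Phi_t$, is equivalent to $$s_{t|t-1}\leftarrow f(s_{t-1},u_t),\quad F_{t-1}\leftarrow\frac{\partial f(s_{t-1},u_t)}{\partial s_{t-1}},\quad \hat y_t\leftarrow h(s_{t|t-1},u_t),\quad J\leftarrow(F_{t-1}^{-1})^\top J_{t-1}F_{t-1}^{-1},$$ $$J_t\leftarrow(1-\gamma_t)J+\gamma_t\,\mathbb E_{y\sim p_{\mathrm{obs}}(\cdot\mid\hat y_t)}\Big[\Big(\frac{\partial\ln p_{\mathrm{obs}}(y\mid\hat y_t)}{\partial s_{t|t-1}}\Big)^{\otimes2}\Big],\qquad s_t\leftarrow s_{t|t-1}+\eta_tJ_t^{-1}\Big(\frac{\partial\ln p_{\mathrm{obs}}(y_t\mid\hat y_t)}{\partial s_{t|t-1}}\Big)^\top,$$ where derivatives with respect to $s_{t|t-1}$ are derivatives of $s\mapsto\ln p_{\mathrm{obs}}(y\mid h(s,u_t))$ at $s=s_{t|t-1}$.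
   Context: Conventions: Jacobian $\partial y/\partial x$ has $(i,j)$ entry $\partial f_i/\partial x_j$; gradients of real functions are row vectors; for a row vector $v$, $v^{\otimes2}=v^\top v$. Exponential family: $p_{\mathrm{obs}}(y\mid\hat y)$ denotes a family of densities $\frac{1}{Z(\beta)}\exp(\sum_k\beta_kT_k(y))\lambda(dy)$ (reference measure $\lambda$, linearly independent sufficient statistics $T$), parameterized by its mean parameter $\hat y=\mathbb{E}[T(y)]$. Dynamical system: states $s_t\in\mathbb{R}^{\dim(s)}$, inputs $u_t$, smooth $f$ with $s_t=f(s_{t-1},u_t)$; smooth $h$ with predictions $\hat y_t=h(s_t,u_t)$; observations $y_t\sim p_{\mathrm{obs}}(y\mid\hat y_t)$. $\mathcal S$ is the set of sequences $\mathbf{s}=(s_t)_{t\ge0}$ with $s_t=f(s_{t-1},u_t)$ for all $t\ge1$; $\Phi_t:\mathcal S\to\mathbb{R}^{\dim(s)}$, $\Phi_t(\mathbf{s})=s_t$; $\mathfrak{p}_t(y\mid\mathbf{s}):=p_{\mathrm{obs}}(y\mid h(\Phi_t(\mathbf{s}),u_t))$. Online natural gradient in charts: on a smooth manifold $\Theta$ with models $\mathfrak p_t(y\mid\vartheta)$ and charts $\Phi_t:\Theta\to\mathbb{R}^{\dim\Theta}$ (for a tensor $g$, $\mathbf{T}\Phi(g)$ is its coordinate expression in chart $\Phi$, and $\mathbf T_\vartheta\Phi^{-1}$ the inverse operation at $\vartheta$), the algorithm maintains $\vartheta_t\in\Theta$ and a $(0,2)$-tensor $\mathcal J_t$ at $\vartheta_t$,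 updated for $t\ge1$ with learning rate $\eta_t$ and decay rate $\gamma_t$ by: $\theta\leftarrow\Phi_t(\vartheta_{t-1})$, $J\leftarrow\mathbf T\Phi_t(\mathcal J_{t-1})$; $J_t\leftarrow(1-\gamma_t)J+\gamma_t\mathbf T\Phi_t\big(\mathbb E_{y\sim\mathfrak p_t(\cdot\mid\vartheta_{t-1})}[(\partial\ln\mathfrak p_t(y\mid\vartheta)/\partial\vartheta|_{\vartheta_{t-1}})^{\otimes2}]\big)$; $\theta_t\leftarrow\theta+\eta_tJ_t^{-1}\mathbf T\Phi_t(\partial\ln\mathfrak p_t(y_t\mid\vartheta)/\partial\vartheta|_{\vartheta_{t-1}})^\top$; $\vartheta_t\leftarrow\Phi_t^{-1}(\theta_t)$, $\mathcal J_t\leftarrow\mathbf T_{\vartheta_t}\Phi_t^{-1}(J_t)$. Here $\Theta=\mathcal S$ and $\vartheta_t=\mathbf s^t$. *)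

theory Defs
  imports "HOL-Analysis.Analysis"
begin

(* C^infinity real-valued functions on an open set of R^n: differentiable, and every
   partial derivative is again C^infinity (coinductively: derivatives of all orders exist). *)
coinductive Cinf_on :: "(real^'n) set \<Rightarrow> (real^'n \<Rightarrow> real) \<Rightarrow> bool" where
  "\<lbrakk> \<forall>x\<in>S. g differentiable (at x);
     \<forall>i. Cinf_on S (\<lambda>x. frechet_derivative g (at x) (axis i 1)) \<rbrakk> \<Longrightarrow> Cinf_on S g"

definition smooth_map :: "(real^'n) set \<Rightarrow> (real^'n \<Rightarrow> real^'m) \<Rightarrow> bool" where
  "smooth_map S g \<longleftrightarrow> (\<forall>j. Cinf_on S (\<lambda>x. g x $ j))"

definition diffeomorphism :: "(real^'n \<Rightarrow> real^'n) \<Rightarrow> bool" where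
  "diffeomorphism g \<longleftrightarrow> bij g \<and> smooth_map UNIV g \<and> smooth_map UNIV (inv g)"

(* gradient (as a vector of partial derivatives = the row vector, stored as real^'n) *)
definition grad :: "(real^'n \<Rightarrow> real) \<Rightarrow> real^'n \<Rightarrow> real^'n" where
  "grad g x = (\<chi> i. frechet_derivative g (at x) (axis i 1))"

(* Exponential family with reference measure M and linearly independent sufficient
   statistics T, parameterized by its mean parameter yhat ranging over the open set D:
   p y yhat = exp(beta . T y) / Z(beta) with E[T] = yhat. *)
definition expfam_mean ::
  "'y measure \<Rightarrow> ('y \<Rightarrow> real^'k) \<Rightarrow> (real^'k) set \<Rightarrow> ('y \<Rightarrow> real^'k \<Rightarrow> real) \<Rightarrow> bool" where
  "expfam_mean M T D p \<longleftrightarrow>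
     T \<in> borel_measurable M \<and>
     (\<forall>c. (\<forall>y\<in>space M. c \<bullet> T y = 0) \<longrightarrow> c = 0) \<and>
     (\<forall>yh\<in>D. \<exists>\<beta>. integrable M (\<lambda>y. exp (\<beta> \<bullet> T y)) \<and>
        (\<integral>y. exp (\<beta> \<bullet> T y) \<partial>M) > 0 \<and>
        (\<forall>y\<in>space M. p y yh = exp (\<beta> \<bullet> T y) / (\<integral>y. exp (\<beta> \<bullet> T y) \<partial>M)) \<and>
        integrable M (\<lambda>y. p y yh *\<^sub>R T y) \<and>
        (\<integral>y. p y yh *\<^sub>R T y \<partial>M) = yh)"

definition traj_set :: "(real^'n \<Rightarrow> 'u \<Rightarrow> real^'n) \<Rightarrow> (nat \<Rightarrow> 'u) \<Rightarrow> (nat \<Rightarrow> real^'n) set" where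
  "traj_set f u = {\<sigma>. \<forall>t\<ge>1. \<sigma> t = f (\<sigma> (t - 1)) (u t)}"

(* chart Phi_t(sigma) = sigma t; its inverse *)
definition chart_inv :: "(real^'n \<Rightarrow> 'u \<Rightarrow> real^'n) \<Rightarrow> (nat \<Rightarrow> 'u) \<Rightarrow> nat \<Rightarrow> real^'n \<Rightarrow> (nat \<Rightarrow> real^'n)" where
  "chart_inv f u t x = (THE \<sigma>. \<sigma> \<in> traj_set f u \<and> \<sigma> t = x)"

(* Tangent vectors of S at theta are represented by sequences v with v k = T Phi_k (v).
   tlift = T_{theta} Phi_t^{-1} applied to a coordinate vector w in chart Phi_t. *)
definition tlift :: "(real^'n \<Rightarrow> 'u \<Rightarrow> real^'n) \<Rightarrow> (nat \<Rightarrow> 'u) \<Rightarrow> (nat \<Rightarrow> real^'n) \<Rightarrow> nat \<Rightarrow> real^'n \<Rightarrow> (nat \<Rightarrow> real^'n)" where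
  "tlift f u \<theta> t w = (\<lambda>k. frechet_derivative (\<lambda>x. chart_inv f u t x k) (at (\<theta> t)) w)"

(* differential at theta of a real function g on S (smooth structure from the compatible
   charts Phi_k; computed in chart Phi_0), applied to a tangent vector v *)
definition mdiff :: "(real^'n \<Rightarrow> 'u \<Rightarrow> real^'n) \<Rightarrow> (nat \<Rightarrow> 'u) \<Rightarrow> ((nat \<Rightarrow> real^'n) \<Rightarrow> real) \<Rightarrow> (nat \<Rightarrow> real^'n) \<Rightarrow> (nat \<Rightarrow> real^'n) \<Rightarrow> real" where
  "mdiff f u g \<theta> v = frechet_derivative (\<lambda>x. g (chart_inv f u 0 x)) (at (\<theta> 0)) (v 0)"

definition chart_covec :: "(real^'n \<Rightarrow> 'u \<Rightarrow> real^'n) \<Rightarrow> (nat \<Rightarrow> 'u) \<Rightarrow> nat \<Rightarrow> (nat \<Rightarrow> real^'n) \<Rightarrow> ((nat \<Rightarrow> real^'n) \<Rightarrow> real) \<Rightarrow> real^'n" where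
  "chart_covec f u t \<theta> L = (\<chi> i. L (tlift f u \<theta> t (axis i 1)))"

definition chart_tensor :: "(real^'n \<Rightarrow> 'u \<Rightarrow> real^'n) \<Rightarrow> (nat \<Rightarrow> 'u) \<Rightarrow> nat \<Rightarrow> (nat \<Rightarrow> real^'n) \<Rightarrow> ((nat \<Rightarrow> real^'n) \<Rightarrow> (nat \<Rightarrow> real^'n) \<Rightarrow> real) \<Rightarrow> real^'n^'n" where
  "chart_tensor f u t \<theta> G = (\<chi> i j. G (tlift f u \<theta> t (axis i 1)) (tlift f u \<theta> t (axis j 1)))"

(* T Phi_t^{-1}: the (0,2)-tensor whose matrix in chart Phi_t is J *)
definition tensor_of_chart :: "nat \<Rightarrow> real^'n^'n \<Rightarrow> ((nat \<Rightarrow> real^'n) \<Rightarrow> (nat \<Rightarrow> real^'n) \<Rightarrow> real)" where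
  "tensor_of_chart t J = (\<lambda>v w. v t \<bullet> (J *v w t))"

definition is_tensor_at :: "(real^'n \<Rightarrow> 'u \<Rightarrow> real^'n) \<Rightarrow> (nat \<Rightarrow> 'u) \<Rightarrow> (nat \<Rightarrow> real^'n) \<Rightarrow> ((nat \<Rightarrow> real^'n) \<Rightarrow> (nat \<Rightarrow> real^'n) \<Rightarrow> real) \<Rightarrow> bool" where
  "is_tensor_at f u \<theta> G \<longleftrightarrow> bilinear (\<lambda>a b. G (tlift f u \<theta> 0 a) (tlift f u \<theta> 0 b))"

end

theory Submission imports Defs begin

lemma traj_step:
  assumes "\<sigma> \<in> traj_set f u" shows "\<sigma> (Suc k) = f (\<sigma> k) (u (Suc k))"
proof -
  have "\<forall>t\<ge>1. \<sigma> t = f (\<sigma> (t - 1)) (u t)" using assms by (simp add: traj_set_def)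
  then have "\<sigma> (Suc k) = f (\<sigma> (Suc k - 1)) (u (Suc k))" by simp
  then show ?thesis by simp
qed

lemma matrix_inv_eq:
  fixes A B :: "real^'n^'n"
  assumes "B ** A = mat 1"
  shows "matrix_inv A = B"
proof -
  have AB: "A ** B = mat 1" using assms matrix_left_right_inverse by blast
  have "A ** matrix_inv A = mat 1 \<and> matrix_inv A ** A = mat 1"
    unfolding matrix_inv_def by (rule someI[of _ B]) (use assms AB in auto)
  then have "matrix_inv A = (B ** A) ** matrix_inv A" using assms by simp
  also have "\<dots> = B ** (A ** matrix_inv A)" by (simp add: matrix_mul_assoc)
  also have "\<dots> = B" using \<open>A ** matrix_inv A = mat 1 \<and> _\<close> by simp
  finally show ?thesis .
qed

locale sysm =
  fixes f :: "real^'n \<Rightarrow> 'u \<Rightarrow> real^'n" and u :: "nat \<Rightarrow> 'u"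
  assumes bijf: "\<And>t. bij (\<lambda>s. f s (u t))"
    and df: "\<And>t x. (\<lambda>s. f s (u t)) differentiable at x"
    and dfi: "\<And>t x. inv (\<lambda>s. f s (u t)) differentiable at x"
begin

lemma finv_f: "f (inv (\<lambda>s. f s (u t)) x) (u t) = x"
proof -
  have "(\<lambda>s. f s (u t)) (inv (\<lambda>s. f s (u t)) x) = x"
    by (rule surj_f_inv_f[OF bij_is_surj[OF bijf]])
  then show ?thesis by simp
qed

lemma inv_f: "inv (\<lambda>s. f s (u t)) (f x (u t)) = x"
proof -
  have "inv (\<lambda>s. f s (u t)) ((\<lambda>s. f s (u t)) x) = x"
    by (rule inv_f_f[OF bij_is_inj[OF bijf]])
  then show ?thesis by simp
qed

lemma traj_unique:
  assumes s: "\<sigma> \<in> traj_set f u" and tt: "\<tau> \<in> traj_set f u" and eq: "\<sigma> t = \<tau> t"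
  shows "\<sigma> = \<tau>"
proof -
  have step_iff: "\<sigma> (Suc n) = \<tau> (Suc n) \<longleftrightarrow> \<sigma> n = \<tau> n" for n
  proof
    assume "\<sigma> n = \<tau> n"
    then show "\<sigma> (Suc n) = \<tau> (Suc n)" by (simp only: traj_step[OF s] traj_step[OF tt])
  next
    assume h: "\<sigma> (Suc n) = \<tau> (Suc n)"
    have "\<sigma> n = inv (\<lambda>s. f s (u (Suc n))) (\<sigma> (Suc n))"
      by (simp only: traj_step[OF s] inv_f)
    also have "\<dots> = inv (\<lambda>s. f s (u (Suc n))) (\<tau> (Suc n))" by (simp only: h)
    also have "\<dots> = \<tau> n" by (simp only: traj_step[OF tt] inv_f)
    finally show "\<sigma> n = \<tau> n" .
  qed
  have all: "\<sigma> n = \<tau> n \<longleftrightarrow> \<sigma> 0 = \<tau> 0" for n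
    by (induction n) (simp_all only: step_iff)
  show ?thesis
  proof
    fix n show "\<sigma> n = \<tau> n" using all[of n] all[of t] eq by blast
  qed
qed

lemma traj_exists: "\<exists>\<sigma>\<in>traj_set f u. \<sigma> t = x"
proof (induction t arbitrary: x)
  case 0
  define \<sigma> where "\<sigma> = rec_nat x (\<lambda>k s. f s (u (Suc k)))"
  have "\<sigma> \<in> traj_set f u" unfolding traj_set_def
  proof (intro CollectI allI impI)
    fix t :: nat assume "t \<ge> 1"
    then obtain k where "t = Suc k" by (cases t) auto
    then show "\<sigma> t = f (\<sigma> (t - 1)) (u t)" by (simp add: \<sigma>_def)
  qed
  moreover have "\<sigma> 0 = x" by (simp add: \<sigma>_def)
  ultimately show ?case by blast
next
  case (Suc t)
  obtain \<sigma> where s: "\<sigma> \<in> traj_set f u" "\<sigma> t = inv (\<lambda>s. f s (u (Suc t))) x"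
    using Suc by blast
  have "\<sigma> (Suc t) = x" using traj_step[OF s(1), of t] s(2) finv_f by simp
  with s show ?case by blast
qed

lemma chart_inv_props: "chart_inv f u t x \<in> traj_set f u \<and> chart_inv f u t x t = x"
proof -
  have "\<exists>!\<sigma>. \<sigma> \<in> traj_set f u \<and> \<sigma> t = x"
  proof (rule ex_ex1I)
    show "\<exists>\<sigma>. \<sigma> \<in> traj_set f u \<and> \<sigma> t = x" using traj_exists[of t x] by blast
    fix \<sigma> \<tau> assume "\<sigma> \<in> traj_set f u \<and> \<sigma> t = x" "\<tau> \<in> traj_set f u \<and> \<tau> t = x"
    then show "\<sigma> = \<tau>" using traj_unique[of \<sigma> \<tau> t] by simp
  qed
  then show ?thesis unfolding chart_inv_def by (rule theI')
qed

lemma chart_inv_traj: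
  assumes s: "\<sigma> \<in> traj_set f u"
  shows "chart_inv f u t (\<sigma> t) = \<sigma>"
  by (rule traj_unique[OF chart_inv_props[THEN conjunct1] s]) (rule chart_inv_props[THEN conjunct2])

lemma chart_inv_Suc: "chart_inv f u (Suc t) x = chart_inv f u t (inv (\<lambda>s. f s (u (Suc t))) x)"
proof -
  let ?\<sigma> = "chart_inv f u (Suc t) x"
  have p: "?\<sigma> \<in> traj_set f u" "?\<sigma> (Suc t) = x" using chart_inv_props by auto
  have "?\<sigma> t = inv (\<lambda>s. f s (u (Suc t))) x"
  proof -
    have "?\<sigma> t = inv (\<lambda>s. f s (u (Suc t))) (f (?\<sigma> t) (u (Suc t)))" by (rule inv_f[symmetric])
    also have "f (?\<sigma> t) (u (Suc t)) = x" using traj_step[OF p(1), of t] p(2) by simp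
    finally show ?thesis .
  qed
  then show ?thesis using chart_inv_traj[OF p(1), of t] by simp
qed

lemma chart_inv_0_diff: "(\<lambda>x. chart_inv f u 0 x k) differentiable at z"
proof (induction k arbitrary: z)
  case 0
  have "(\<lambda>x. chart_inv f u 0 x 0) = (\<lambda>x. x)" using chart_inv_props by auto
  then show ?case by simp
next
  case (Suc k)
  have "(\<lambda>x. chart_inv f u 0 x (Suc k)) = (\<lambda>s. f s (u (Suc k))) \<circ> (\<lambda>x. chart_inv f u 0 x k)"
  proof
    fix x
    show "chart_inv f u 0 x (Suc k) = ((\<lambda>s. f s (u (Suc k))) \<circ> (\<lambda>x. chart_inv f u 0 x k)) x"
      using traj_step[OF chart_inv_props[THEN conjunct1], of 0 x k] by simp
  qed
  then show ?case using Suc df by (simp add: differentiable_chain_at)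
qed

lemma chart_inv_to0_diff: "(\<lambda>x. chart_inv f u t x 0) differentiable at z"
proof (induction t arbitrary: z)
  case 0
  have "(\<lambda>x. chart_inv f u 0 x 0) = (\<lambda>x. x)" using chart_inv_props by auto
  then show ?case by simp
next
  case (Suc t)
  have "(\<lambda>x. chart_inv f u (Suc t) x 0) = (\<lambda>x. chart_inv f u t x 0) \<circ> inv (\<lambda>s. f s (u (Suc t)))"
    using chart_inv_Suc by (auto simp: fun_eq_iff)
  then show ?case using Suc dfi by (simp add: differentiable_chain_at)
qed

lemma tlift_self: "tlift f u \<sigma> t w t = w"
proof -
  have "(\<lambda>x. chart_inv f u t x t) = (\<lambda>x. x)" using chart_inv_props by auto
  then show ?thesis unfolding tlift_def by simp
qed

lemma chart_tensor_of_chart: "chart_tensor f u t \<sigma> (tensor_of_chart t J) = J"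
  unfolding chart_tensor_def tensor_of_chart_def tlift_self
  by (simp add: vec_eq_iff inner_axis' matrix_vector_mult_basis column_def)

lemma dinv:
  "frechet_derivative (inv (\<lambda>s. f s (u t))) (at (f a (u t))) w
     = matrix_inv (matrix (frechet_derivative (\<lambda>s. f s (u t)) (at a))) *v w"
proof -
  let ?F = "\<lambda>s. f s (u t)"
  let ?DF = "frechet_derivative ?F (at a)"
  let ?DI = "frechet_derivative (inv ?F) (at (?F a))"
  have c: "inv ?F \<circ> ?F = id" using inv_f by (simp add: fun_eq_iff)
  have "frechet_derivative (inv ?F \<circ> ?F) (at a) = ?DI \<circ> ?DF"
    by (rule frechet_derivative_compose[OF df dfi])
  then have e: "?DI \<circ> ?DF = id" using c by simp
  have l1: "linear ?DF" by (rule linear_frechet_derivative[OF df])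
  have l2: "linear ?DI" by (rule linear_frechet_derivative[OF dfi])
  have "matrix ?DI ** matrix ?DF = mat 1"
    using matrix_compose[OF l1 l2] e by (simp add: matrix_id_mat_1)
  then have "matrix_inv (matrix ?DF) = matrix ?DI" by (rule matrix_inv_eq)
  moreover have "matrix ?DI *v w = ?DI w" using fun_cong[OF matrix_vector_mul(2)[OF l2], of w] by simp
  ultimately show ?thesis by simp
qed

lemma tlift_prev:
  assumes s: "\<sigma> \<in> traj_set f u"
  shows "tlift f u \<sigma> (Suc m) w m
    = matrix_inv (matrix (frechet_derivative (\<lambda>s. f s (u (Suc m))) (at (\<sigma> m)))) *v w"
proof -
  have "(\<lambda>x. chart_inv f u (Suc m) x m) = inv (\<lambda>s. f s (u (Suc m)))"
    using chart_inv_Suc chart_inv_props by (simp add: fun_eq_iff)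
  then show ?thesis unfolding tlift_def using traj_step[OF s, of m] dinv by simp
qed

lemma tlift_1:
  assumes s: "\<sigma> \<in> traj_set f u"
  shows "tlift f u \<sigma> (Suc 0) w
    = tlift f u \<sigma> 0 (matrix_inv (matrix (frechet_derivative (\<lambda>s. f s (u (Suc 0))) (at (\<sigma> 0)))) *v w)"
proof
  fix k
  let ?I = "inv (\<lambda>s. f s (u (Suc 0)))"
  have e: "(\<lambda>x. chart_inv f u (Suc 0) x k) = (\<lambda>z. chart_inv f u 0 z k) \<circ> ?I"
    using chart_inv_Suc by (simp add: fun_eq_iff)
  have s1: "\<sigma> (Suc 0) = f (\<sigma> 0) (u (Suc 0))" using traj_step[OF s, of 0] .
  have "frechet_derivative ((\<lambda>z. chart_inv f u 0 z k) \<circ> ?I) (at (\<sigma> (Suc 0)))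
      = frechet_derivative (\<lambda>z. chart_inv f u 0 z k) (at (?I (\<sigma> (Suc 0)))) \<circ> frechet_derivative ?I (at (\<sigma> (Suc 0)))"
    by (rule frechet_derivative_compose[OF dfi chart_inv_0_diff])
  then show "tlift f u \<sigma> (Suc 0) w k = tlift f u \<sigma> 0 (matrix_inv (matrix (frechet_derivative (\<lambda>s. f s (u (Suc 0))) (at (\<sigma> 0)))) *v w) k"
    unfolding tlift_def e using s1 inv_f dinv by simp
qed

lemma covec:
  assumes s: "\<theta> \<in> traj_set f u" and dq: "\<And>x. q differentiable at x"
  shows "chart_covec f u t \<theta> (mdiff f u (\<lambda>\<sigma>. q (\<sigma> t)) \<theta>) = grad q (\<theta> t)"
proof -
  let ?G = "\<lambda>x. q (chart_inv f u 0 x t)"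
  let ?P = "\<lambda>x. chart_inv f u t x 0"
  have comp: "?G \<circ> ?P = q"
  proof
    fix x
    have "chart_inv f u 0 (chart_inv f u t x 0) = chart_inv f u t x"
      by (rule chart_inv_traj[OF chart_inv_props[THEN conjunct1]])
    then show "(?G \<circ> ?P) x = q x" using chart_inv_props by simp
  qed
  have P0: "?P (\<theta> t) = \<theta> 0" using chart_inv_traj[OF s] by simp
  have dG: "?G differentiable at z" for z
    using differentiable_chain_at[OF chart_inv_0_diff dq] by (simp add: o_def)
  have "frechet_derivative (?G \<circ> ?P) (at (\<theta> t)) = frechet_derivative ?G (at (?P (\<theta> t))) \<circ> frechet_derivative ?P (at (\<theta> t))"
    by (rule frechet_derivative_compose[OF chart_inv_to0_diff dG])
  then show ?thesis
    unfolding chart_covec_def mdiff_def grad_def tlift_def comp P0 by simp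
qed

end


lemma Cinf_diff: "Cinf_on S g \<Longrightarrow> x \<in> S \<Longrightarrow> g differentiable at x"
  by (erule Cinf_on.cases) auto

lemma smooth_diff:
  fixes g :: "real^'n \<Rightarrow> real^'m"
  assumes "smooth_map UNIV g"
  shows "g differentiable at x"
proof -
  have "(\<lambda>x. g x \<bullet> i) differentiable at x" if "i \<in> Basis" for i
  proof -
    from that obtain j where i: "i = axis j 1" by (auto simp: Basis_vec_def)
    have "(\<lambda>x. g x \<bullet> i) = (\<lambda>x. g x $ j)" by (simp add: i inner_axis)
    moreover have "(\<lambda>x. g x $ j) differentiable at x"
      using assms unfolding smooth_map_def by (auto intro: Cinf_diff)
    ultimately show ?thesis by simp
  qed
  then show ?thesis using differentiable_componentwise_within[of g x UNIV] by simp
qed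

lemma expfam_pos:
  assumes "expfam_mean M T D p" "yh \<in> D" "yy \<in> space M" shows "p yy yh > 0"
proof -
  obtain \<beta> where b: "(\<integral>y. exp (\<beta> \<bullet> T y) \<partial>M) > 0"
     "\<forall>y\<in>space M. p y yh = exp (\<beta> \<bullet> T y) / (\<integral>y. exp (\<beta> \<bullet> T y) \<partial>M)"
    using assms(1,2) unfolding expfam_mean_def by blast
  then show ?thesis using assms(3) by simp
qed

lemma ln_diff:
  fixes g :: "real^'n \<Rightarrow> real"
  assumes "g differentiable at x" "g x > 0"
  shows "(\<lambda>z. ln (g z)) differentiable at x"
proof -
  obtain g' where "(g has_derivative g') (at x)" using assms(1) by (auto simp: differentiable_def)
  from has_derivative_ln[OF assms(2) this] show ?thesis by (auto simp: differentiable_def)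
qed

lemma bilin_matrix:
  fixes P X Y :: "real^'n^'n"
  assumes B: "bilinear B"
    and X: "\<And>i j. X $ i $ j = B (P *v axis i 1) (P *v axis j 1)"
    and Y: "\<And>a b. Y $ a $ b = B (axis a 1) (axis b 1)"
  shows "X = transpose P ** Y ** P"
proof -
  have col: "P *v axis i 1 = (\<Sum>a\<in>UNIV. P $ a $ i *\<^sub>R axis a 1)" for i
  proof -
    have "P *v axis i 1 = (\<Sum>a\<in>UNIV. (P *v axis i 1) $ a *s axis a 1)"
      by (rule basis_expansion[symmetric])
    then show ?thesis by (simp add: matrix_vector_mult_basis column_def scalar_mult_eq_scaleR)
  qed
  have "X $ i $ j = (transpose P ** Y ** P) $ i $ j" for i j
  proof -
    have "X $ i $ j = (\<Sum>(a,b)\<in>UNIV \<times> UNIV. B (P $ a $ i *\<^sub>R axis a 1) (P $ b $ j *\<^sub>R axis b 1))"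
      unfolding X col by (rule bilinear_sum[OF B])
    also have "\<dots> = (\<Sum>(a,b)\<in>UNIV \<times> UNIV. P $ a $ i * P $ b $ j * Y $ a $ b)"
      by (rule sum.cong) (auto simp: bilinear_lmul[OF B] bilinear_rmul[OF B] Y)
    also have "\<dots> = (\<Sum>a\<in>UNIV. \<Sum>b\<in>UNIV. P $ a $ i * P $ b $ j * Y $ a $ b)"
      by (rule sum.cartesian_product[symmetric])
    also have "\<dots> = (\<Sum>b\<in>UNIV. \<Sum>a\<in>UNIV. P $ a $ i * P $ b $ j * Y $ a $ b)"
      by (rule sum.swap)
    also have "\<dots> = (\<Sum>b\<in>UNIV. (\<Sum>a\<in>UNIV. P $ a $ i * Y $ a $ b) * P $ b $ j)"
      by (simp add: sum_distrib_right sum_distrib_left mult_ac)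
    also have "\<dots> = (transpose P ** Y ** P) $ i $ j"
      by (simp add: matrix_matrix_mult_def transpose_def)
    finally show ?thesis .
  qed
  then show ?thesis by (simp add: vec_eq_iff)
qed
theorem corollary9:
  fixes f :: "real^'n \<Rightarrow> 'u \<Rightarrow> real^'n"
    and u :: "nat \<Rightarrow> 'u"
    and h :: "real^'n \<Rightarrow> 'u \<Rightarrow> real^'k"
    and M :: "'y measure" and T :: "'y \<Rightarrow> real^'k" and D :: "(real^'k) set"
    and p_obs :: "'y \<Rightarrow> real^'k \<Rightarrow> real"
    and y :: "nat \<Rightarrow> 'y"
    and \<eta> \<gamma> :: "nat \<Rightarrow> real"
    and vth :: "nat \<Rightarrow> (nat \<Rightarrow> real^'n)"
    and Jt_seq :: "nat \<Rightarrow> ((nat \<Rightarrow> real^'n) \<Rightarrow> (nat \<Rightarrow> real^'n) \<Rightarrow> real)"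
  assumes diffeo: "\<And>t. diffeomorphism (\<lambda>s. f s (u t))"
    and h_smooth: "\<And>t. smooth_map UNIV (\<lambda>s. h s (u t))"
    and h_range: "\<And>s t. h s (u t) \<in> D"
    and D_open: "open D"
    and expfam: "expfam_mean M T D p_obs"
    and p_smooth: "\<And>yy. yy \<in> space M \<Longrightarrow> Cinf_on D (p_obs yy)"
    and obs: "\<And>t. y t \<in> space M"
    and init_pt: "vth 0 \<in> traj_set f u"
    and init_tensor: "is_tensor_at f u (vth 0) (Jt_seq 0)"
    and step: "\<And>t. t \<ge> 1 \<Longrightarrow>
      (let \<theta> = vth (t - 1) t;
           J = chart_tensor f u t (vth (t - 1)) (Jt_seq (t - 1));
           dl = (\<lambda>yy. mdiff f u (\<lambda>\<sigma>. ln (p_obs yy (h (\<sigma> t) (u t)))) (vth (t - 1)));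
           Fish = (\<lambda>v w. \<integral>yy. dl yy v * dl yy w * p_obs yy (h (vth (t - 1) t) (u t)) \<partial>M);
           Jt = (1 - \<gamma> t) *\<^sub>R J + \<gamma> t *\<^sub>R chart_tensor f u t (vth (t - 1)) Fish;
           \<theta>t = \<theta> + \<eta> t *\<^sub>R (matrix_inv Jt *v chart_covec f u t (vth (t - 1)) (dl (y t)))
       in vth t = chart_inv f u t \<theta>t \<and> Jt_seq t = tensor_of_chart t Jt)"
  shows "\<forall>t\<ge>1.
      (let s = (\<lambda>k. vth k k);
           Jm = (\<lambda>k. chart_tensor f u k (vth k) (Jt_seq k));
           s_pred = f (s (t - 1)) (u t);
           F = matrix (frechet_derivative (\<lambda>x. f x (u t)) (at (s (t - 1))));
           yhat = h s_pred (u t);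
           g = (\<lambda>yy. grad (\<lambda>x. ln (p_obs yy (h x (u t)))) s_pred);
           J = transpose (matrix_inv F) ** Jm (t - 1) ** matrix_inv F;
           Fish = (\<chi> i j. \<integral>yy. (g yy $ i * g yy $ j) * p_obs yy yhat \<partial>M)
       in Jm t = (1 - \<gamma> t) *\<^sub>R J + \<gamma> t *\<^sub>R Fish
          \<and> s t = s_pred + \<eta> t *\<^sub>R (matrix_inv (Jm t) *v g (y t)))"
proof -
  have bijf: "\<And>t. bij (\<lambda>s. f s (u t))" using diffeo unfolding diffeomorphism_def by blast
  have df: "\<And>t x. (\<lambda>s. f s (u t)) differentiable at x"
    using diffeo unfolding diffeomorphism_def by (blast intro: smooth_diff)
  have dfi: "\<And>t x. inv (\<lambda>s. f s (u t)) differentiable at x"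
    using diffeo unfolding diffeomorphism_def by (blast intro: smooth_diff)
  interpret sysm f u by unfold_locales (fact bijf df dfi)+
  have dq: "(\<lambda>x. ln (p_obs yy (h x (u t)))) differentiable at x" if yy: "yy \<in> space M" for yy t x
  proof -
    have "(\<lambda>x. h x (u t)) differentiable at x" by (rule smooth_diff[OF h_smooth])
    moreover have "p_obs yy differentiable at (h x (u t))" by (rule Cinf_diff[OF p_smooth[OF yy] h_range])
    ultimately have "(p_obs yy \<circ> (\<lambda>x. h x (u t))) differentiable at x" by (rule differentiable_chain_at)
    then have "(\<lambda>x. p_obs yy (h x (u t))) differentiable at x" by (simp add: o_def)
    then show ?thesis by (rule ln_diff) (rule expfam_pos[OF expfam h_range yy])
  qed
  define dl where "dl m yy = mdiff f u (\<lambda>\<sigma>. ln (p_obs yy (h (\<sigma> (Suc m)) (u (Suc m))))) (vth m)" for m yy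
  define Fi where "Fi m = (\<lambda>v w. \<integral>yy. dl m yy v * dl m yy w * p_obs yy (h (vth m (Suc m)) (u (Suc m))) \<partial>M)" for m
  define J0 where "J0 m = chart_tensor f u (Suc m) (vth m) (Jt_seq m)" for m
  define JT where "JT m = (1 - \<gamma> (Suc m)) *\<^sub>R J0 m + \<gamma> (Suc m) *\<^sub>R chart_tensor f u (Suc m) (vth m) (Fi m)" for m
  define TT where "TT m = vth m (Suc m) + \<eta> (Suc m) *\<^sub>R (matrix_inv (JT m) *v chart_covec f u (Suc m) (vth m) (dl m (y (Suc m))))" for m
  have stp: "vth (Suc m) = chart_inv f u (Suc m) (TT m) \<and> Jt_seq (Suc m) = tensor_of_chart (Suc m) (JT m)" for m
    using step[of "Suc m"] by (simp add: Let_def dl_def Fi_def J0_def JT_def TT_def)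
  have traj: "vth k \<in> traj_set f u" for k
    by (cases k) (use init_pt stp chart_inv_props in auto)
  have bil: "bilinear (\<lambda>a b. a \<bullet> (A *v b))" for A :: "real^'n^'n"
    by (simp add: bilinear_def linear_iff inner_add_left inner_add_right matrix_vector_right_distrib
        matrix_vector_mult_scaleR)
  have ent: "axis a 1 \<bullet> (A *v axis b 1) = A $ a $ b" for A :: "real^'n^'n" and a b
    by (simp add: inner_axis' matrix_vector_mult_basis column_def)
  show ?thesis
  proof (intro allI impI)
    fix t :: nat assume "t \<ge> 1"
    then obtain m where tm: "t = Suc m" by (cases t) auto
    let ?F = "\<lambda>x. f x (u (Suc m))"
    define Pm where "Pm = matrix_inv (matrix (frechet_derivative ?F (at (vth m m))))"
    define g where "g = (\<lambda>yy. grad (\<lambda>x. ln (p_obs yy (h x (u (Suc m))))) (f (vth m m) (u (Suc m))))"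
    have F1: "vth m (Suc m) = f (vth m m) (u (Suc m))" by (rule traj_step[OF traj])
    have JmS: "chart_tensor f u (Suc m) (vth (Suc m)) (Jt_seq (Suc m)) = JT m"
      using stp chart_tensor_of_chart by simp
    have sS: "vth (Suc m) (Suc m) = TT m" using stp chart_inv_props by simp
    have cv: "chart_covec f u (Suc m) (vth m) (dl m yy) = g yy" if yy: "yy \<in> space M" for yy
      using covec[OF traj[of m] dq[OF yy, of "Suc m"], where t="Suc m"] F1 by (simp add: dl_def g_def)
    have Fish: "chart_tensor f u (Suc m) (vth m) (Fi m)
       = (\<chi> i j. \<integral>yy. (g yy $ i * g yy $ j) * p_obs yy (h (f (vth m m) (u (Suc m))) (u (Suc m))) \<partial>M)"
    proof -
      have "dl m yy (tlift f u (vth m) (Suc m) (axis i 1)) = g yy $ i" if "yy \<in> space M" for yy i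
        using cv[OF that] unfolding chart_covec_def by (metis vec_lambda_beta)
      then show ?thesis unfolding chart_tensor_def Fi_def F1
        by (intro iffD2[OF vec_eq_iff] allI) (simp add: vec_eq_iff cong: Bochner_Integration.integral_cong)
    qed
    have J0e: "J0 m = transpose Pm ** chart_tensor f u m (vth m) (Jt_seq m) ** Pm"
    proof (cases m)
      case 0
      let ?B = "\<lambda>a b. Jt_seq 0 (tlift f u (vth 0) 0 a) (tlift f u (vth 0) 0 b)"
      show ?thesis unfolding 0
      proof (rule bilin_matrix[of ?B])
        show "bilinear ?B" using init_tensor unfolding is_tensor_at_def .
        show "J0 0 $ i $ j = ?B (Pm *v axis i 1) (Pm *v axis j 1)" for i j
          unfolding J0_def chart_tensor_def using tlift_1[OF traj[of 0]] 0 by (simp add: Pm_def)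
        show "chart_tensor f u 0 (vth 0) (Jt_seq 0) $ a $ b = ?B (axis a 1) (axis b 1)" for a b
          unfolding chart_tensor_def by simp
      qed
    next
      case (Suc m')
      let ?B = "\<lambda>a b. a \<bullet> (JT m' *v b)"
      have Y: "chart_tensor f u m (vth m) (Jt_seq m) = JT m'"
        using stp[of m'] chart_tensor_of_chart Suc by simp
      show ?thesis unfolding Y
      proof (rule bilin_matrix[of ?B])
        show "bilinear ?B" by (rule bil)
        show "J0 m $ i $ j = ?B (Pm *v axis i 1) (Pm *v axis j 1)" for i j
          unfolding J0_def chart_tensor_def using stp[of m'] tlift_prev[OF traj[of m]] Suc
          by (simp add: Pm_def tensor_of_chart_def)
        show "JT m' $ a $ b = ?B (axis a 1) (axis b 1)" for a b by (simp add: ent)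
      qed
    qed
    show "let s = (\<lambda>k. vth k k);
           Jm = (\<lambda>k. chart_tensor f u k (vth k) (Jt_seq k));
           s_pred = f (s (t - 1)) (u t);
           F = matrix (frechet_derivative (\<lambda>x. f x (u t)) (at (s (t - 1))));
           yhat = h s_pred (u t);
           g = (\<lambda>yy. grad (\<lambda>x. ln (p_obs yy (h x (u t)))) s_pred);
           J = transpose (matrix_inv F) ** Jm (t - 1) ** matrix_inv F;
           Fish = (\<chi> i j. \<integral>yy. (g yy $ i * g yy $ j) * p_obs yy yhat \<partial>M)
       in Jm t = (1 - \<gamma> t) *\<^sub>R J + \<gamma> t *\<^sub>R Fish
          \<and> s t = s_pred + \<eta> t *\<^sub>R (matrix_inv (Jm t) *v g (y t))"
      unfolding Let_def tm diff_Suc_1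
      apply (rule conjI)
      subgoal unfolding JmS JT_def J0e Fish by (simp add: Pm_def g_def)
      subgoal unfolding sS TT_def JmS using cv[OF obs] F1 by (simp add: g_def)
      done
  qed
qed

end
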